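(* Let $k\ge 1$ and let $S_1,\dots,S_k\subset\mathbb{C}$ be pairwise disjoint bounded convex sets with $\operatorname{diam}(S_i)\le 1$ for all $i$ and $\operatorname{dist}(S_i,S_j)\ge 5k$ for all $i\ne j$. For each $n\ge 1$ let $P_n(z)=\prod_{j=1}^{k}\prod_{i=1}^{n}(z-z_i^{(j)})$, where $z_i^{(j)}\in S_j$ for all $j=1,\dots,k$ and $i=1,\dots,n$ (the points may depend on $n$). Then for every $\epsilon>\frac{3-\sqrt5}{2}$ there is a constant $c(k,\epsilon)$, independent of $n$ and of the choice of the points, such that for every $n\ge1$ and every $i\in\{1,\dots,k\}$ the number of zeros of $P_n'$ (counted with multiplicity) in $S_i^{\epsilon}$ is at least $n-c(k,\epsilon)$.
   Context: For a set $S\subset\mathbb{C}$ and $\epsilon>0$, $S^{\epsilon}=\{z\in\mathbb{C}:\operatorname{dist}(z,S)<\epsilon\}$ denotes the $\epsilon$-neighbourhood of $S$. *)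

theory Defs
  imports "HOL-Analysis.Analysis" "HOL-Computational_Algebra.Polynomial"
begin

definition eps_nbhd :: "complex set \<Rightarrow> real \<Rightarrow> complex set" where
  "eps_nbhd S e = {w. infdist w S < e}"

definition zeros_in :: "complex poly \<Rightarrow> complex set \<Rightarrow> nat" where
  "zeros_in p A = (\<Sum>x\<in>{x\<in>A. poly p x = 0}. order x p)"

text \<open>P_n(z) = prod_j prod_i (z - z_i^(j)), indices 0-based: j < k, i < n.\<close>
definition Pn :: "nat \<Rightarrow> nat \<Rightarrow> (nat \<Rightarrow> nat \<Rightarrow> complex) \<Rightarrow> complex poly" where
  "Pn k n z = (\<Prod>j<k. \<Prod>i<n. [:- z j i, 1:])"

end

theory Submission imports Defs "HOL-Complex_Analysis.Complex_Analysis" "HOL-Computational_Algebra.Fundamental_Theorem_Algebra" begin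

lemma logderiv_prod:
  fixes p :: "'b \<Rightarrow> complex poly"
  assumes "finite A" "\<forall>a\<in>A. poly (p a) x \<noteq> 0"
  shows "poly (pderiv (prod p A)) x = poly (prod p A) x * (\<Sum>a\<in>A. poly (pderiv (p a)) x / poly (p a) x)"
  using assms
proof (induction A rule: finite_induct)
  case empty then show ?case by simp
next
  case (insert a A)
  then show ?case
    by (simp add: pderiv_mult poly_prod field_simps distrib_left)
qed

lemma zorder_poly:
  assumes "(p::complex poly) \<noteq> 0"
  shows "zorder (poly p) a = int (order a p)"
proof -
  obtain q where q: "p = [:-a,1:]^order a p * q" "\<not> [:-a,1:] dvd q"
    using order_decomp[OF assms] by blast
  have "poly q a \<noteq> 0" using q(2) by (simp add: poly_eq_0_iff_dvd)
  show ?thesis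
  proof (rule zorder_eqI[of UNIV a "poly q"])
    show "poly q holomorphic_on UNIV" by (auto intro: holomorphic_intros)
    show "poly q a \<noteq> 0" by fact
    fix w show "poly p w = poly q w * (w - a) powi int (order a p)"
      by (subst q(1)) (simp add: power_int_of_nat)
  qed auto
qed

lemma sum_order_degree:
  assumes "(p::complex poly) \<noteq> 0"
  shows "(\<Sum>x | poly p x = 0. order x p) = degree p"
proof -
  have "degree p = size (proots p)" by (simp add: size_proots_complex)
  also have "\<dots> = (\<Sum>x\<in>set_mset (proots p). count (proots p) x)"
    by (simp add: size_multiset_overloaded_eq)
  also have "\<dots> = (\<Sum>x | poly p x = 0. order x p)"
    using assms by (intro sum.cong) auto
  finally show ?thesis by simp
qed



lemma Re_div_inner: "Re (v / (u::complex)) = inner u v / (cmod u)^2"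
  by (simp add: Re_divide inner_complex_def cmod_power2 algebra_simps)

lemma sum_inv_lower:
  fixes S :: "complex set" and w :: "'b \<Rightarrow> complex"
  assumes cv: "convex S" and bd: "bounded S" and dm: "diameter S \<le> 1" and fin: "finite A"
    and wS: "\<forall>a\<in>A. w a \<in> S" and dpos: "infdist x S > 0"
  shows "real (card A) * (infdist x S / (infdist x S + 1)^2) \<le> cmod (\<Sum>a\<in>A. 1/(x - w a))"
proof -
  define d where "d = infdist x S"
  have Sne: "S \<noteq> {}" using dpos by (auto simp: infdist_def)
  define C where "C = closure S"
  have Cc: "closed C" "convex C" "C \<noteq> {}" "bounded C" using cv Sne bd by (auto simp: C_def convex_closure)
  define p where "p = closest_point C x"
  have pC: "p \<in> C" using Cc by (simp add: p_def closest_point_in_set)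
  have dd: "d = dist x p"
    using setdist_closest_point[OF Cc(1) Cc(3), of x]
    by (simp add: d_def infdist_eq_setdist C_def p_def)
  define v where "v = x - p"
  have nv: "cmod v = d" using dd by (simp add: v_def dist_norm)
  have dp: "d > 0" using dpos d_def by simp
  have trm: "d^2 / (d+1)^2 \<le> Re (v / (x - w a))" if a: "a \<in> A" for a
  proof -
    have wC: "w a \<in> C" using wS a by (auto simp: C_def intro: closure_subset[THEN subsetD])
    have dot: "inner (x - p) (w a - p) \<le> 0" using closest_point_dot[OF Cc(2) Cc(1) wC, of x] by (simp add: p_def)
    have pw: "dist p (w a) \<le> 1"
      using diameter_bounded_bound[OF Cc(4) pC wC] dm diameter_closure[OF bd] by (simp add: C_def)
    define u where "u = x - w a"
    have uv: "u = v + (p - w a)" by (simp add: u_def v_def)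
    have iu: "inner u v \<ge> d^2"
    proof -
      have "inner u v = inner v v - inner (w a - p) v" by (simp add: uv inner_add_left inner_diff_left algebra_simps)
      also have "inner v v = d^2" using nv by (simp add: power2_norm_eq_inner[symmetric])
      finally show ?thesis using dot by (simp add: v_def inner_commute)
    qed
    have nu: "cmod u \<le> d + 1"
    proof -
      have "cmod u \<le> cmod v + cmod (p - w a)" unfolding uv by (rule norm_triangle_ineq)
      thus ?thesis using nv pw by (simp add: dist_norm)
    qed
    have upos: "cmod u > 0"
    proof (rule ccontr)
      assume "\<not> cmod u > 0" then have "u = 0" by simp
      then show False using iu dp by simp
    qed
    have "d^2 / (d+1)^2 \<le> d^2 / (cmod u)^2"
      by (rule divide_left_mono) (use nu upos dp in \<open>auto intro: power_mono\<close>)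
    also have "\<dots> \<le> inner u v / (cmod u)^2" using iu upos by (simp add: divide_right_mono)
    finally show ?thesis by (simp add: Re_div_inner u_def)
  qed
  have "real (card A) * (d^2/(d+1)^2) \<le> (\<Sum>a\<in>A. Re (v / (x - w a)))"
    using sum_mono[of A "\<lambda>_. d^2/(d+1)^2" "\<lambda>a. Re (v / (x - w a))"] trm by simp
  also have "\<dots> = Re (v * (\<Sum>a\<in>A. 1/(x - w a)))" by (simp add: sum_distrib_left)
  also have "\<dots> \<le> cmod (v * (\<Sum>a\<in>A. 1/(x - w a)))" by (rule complex_Re_le_cmod)
  also have "\<dots> = d * cmod (\<Sum>a\<in>A. 1/(x - w a))" by (simp add: norm_mult nv)
  finally have "real (card A) * (d^2/(d+1)^2) \<le> d * cmod (\<Sum>a\<in>A. 1/(x - w a))" .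
  then have "real (card A) * (d/(d+1)^2) * d \<le> cmod (\<Sum>a\<in>A. 1/(x - w a)) * d"
    by (simp add: power2_eq_square algebra_simps)
  then have "real (card A) * (d/(d+1)^2) \<le> cmod (\<Sum>a\<in>A. 1/(x - w a))"
    using dp by (rule mult_right_le_imp_le)
  then show ?thesis by (simp add: d_def)
qed


lemma infdist_far:
  fixes S :: "complex set"
  assumes "c \<in> S" "bounded S" "diameter S \<le> 1" "cmod (x - c) \<ge> r"
  shows "infdist x S \<ge> r - 1"
proof -
  have "r - 1 \<le> dist x s" if "s \<in> S" for s
  proof -
    have "dist c s \<le> 1" using diameter_bounded_bound[OF assms(2,1) that] assms(3) by simp
    moreover have "dist x c \<le> dist x s + dist s c" by (rule dist_triangle)
    ultimately show ?thesis using assms(4) by (simp add: dist_norm dist_commute norm_minus_commute)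
  qed
  then have "r - 1 \<le> (INF s\<in>S. dist x s)" using assms(1) by (intro cINF_greatest) auto
  moreover have "infdist x S = (INF s\<in>S. dist x s)" using assms(1) infdist_notempty by blast
  ultimately show ?thesis by simp
qed

lemma quad_ineq:
  fixes d \<epsilon> :: real
  assumes "d \<le> 2" "d \<ge> 1 \<or> (d \<ge> \<epsilon> \<and> \<epsilon> > (3 - sqrt 5)/2)"
  shows "(d+1)^2 < 5 * d"
proof -
  have "d^2 - 3*d + 1 < 0"
  proof (cases "d \<ge> 1")
    case True
    then have "(d-1)*(d-2) \<le> 0" using assms(1) by (intro mult_nonneg_nonpos) auto
    then show ?thesis by (simp add: algebra_simps power2_eq_square)
  next
    case False
    then have de: "d > (3 - sqrt 5)/2" using assms(2) by auto
    have s5: "sqrt 5 * sqrt 5 = 5" by simp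
    have s1: "sqrt 5 > 1" by simp
    have a1: "d - (3 - sqrt 5)/2 > 0" using de by linarith
    have s2: "(3 + sqrt 5)/2 > 2" using s1 by (simp add: field_simps)
    have a2: "d - (3 + sqrt 5)/2 < 0" using assms(1) s2 by linarith
    have "(d - (3 - sqrt 5)/2) * (d - (3 + sqrt 5)/2) < 0"
      using a1 a2 by (rule mult_pos_neg)
    moreover have "(d - (3 - sqrt 5)/2) * (d - (3 + sqrt 5)/2) = d*d - 3*d + (9 - sqrt 5 * sqrt 5)/4"
      by (simp add: field_simps)
    ultimately show ?thesis using s5 by (simp add: power2_eq_square)
  qed
  then show ?thesis by (simp add: algebra_simps power2_eq_square)
qed


lemma wind_sum:
  fixes F :: "complex poly"
  assumes "F \<noteq> 0" "r > 0" "\<forall>p. poly F p = 0 \<longrightarrow> cmod (p - c) \<noteq> r"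
  shows "(\<Sum>p\<in>{p. poly F p = 0}. winding_number (circlepath c r) p * of_int (zorder (poly F) p))
         = of_nat (\<Sum>p\<in>{p. poly F p = 0 \<and> cmod (p - c) < r}. order p F)"
proof -
  have fin: "finite {p. poly F p = 0}" using poly_roots_finite[OF assms(1)] .
  have "(\<Sum>p\<in>{p. poly F p = 0}. winding_number (circlepath c r) p * of_int (zorder (poly F) p))
     = (\<Sum>p\<in>{p. poly F p = 0}. if cmod (p - c) < r then of_nat (order p F) else 0)"
  proof (rule sum.cong)
    fix p assume "p \<in> {p. poly F p = 0}"
    then have ne: "cmod (p - c) \<noteq> r" using assms(3) by auto
    show "winding_number (circlepath c r) p * of_int (zorder (poly F) p) = (if cmod (p - c) < r then of_nat (order p F) else 0)"
    proof (cases "cmod (p - c) < r")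
      case True
      then show ?thesis using winding_number_circlepath[OF True] zorder_poly[OF assms(1)] by simp
    next
      case False
      have "winding_number (circlepath c r) p = 0"
      proof (rule winding_number_zero_outside[of _ "cball c r"])
        show "p \<notin> cball c r" using False ne by (simp add: dist_norm norm_minus_commute)
        show "path_image (circlepath c r) \<subseteq> cball c r" using assms(2) by auto
      qed auto
      then show ?thesis using False by simp
    qed
  qed simp
  also have "\<dots> = (\<Sum>p\<in>{p\<in>{p. poly F p = 0}. cmod (p - c) < r}. of_nat (order p F))"
    by (rule sum.inter_filter[OF fin, symmetric])
  also have "\<dots> = of_nat (\<Sum>p\<in>{p. poly F p = 0 \<and> cmod (p - c) < r}. order p F)"
    by (simp add: of_nat_sum)
  finally show ?thesis .
qed

lemma cluster_count:
  fixes S :: "nat \<Rightarrow> complex set" and z :: "nat \<Rightarrow> nat \<Rightarrow> complex"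
  assumes k1: "k \<ge> 1" and eps: "\<epsilon> > (3 - sqrt 5)/2"
   and Sj: "\<forall>j<k. bounded (S j) \<and> convex (S j) \<and> diameter (S j) \<le> 1"
   and Sd: "\<forall>i<k. \<forall>j<k. i \<noteq> j \<longrightarrow> S i \<inter> S j = {} \<and> setdist (S i) (S j) \<ge> 5 * real k"
   and n1: "n \<ge> 1" and zS: "\<forall>j<k. \<forall>i<n. z j i \<in> S j" and ik: "i < k"
  shows "real n - 1 \<le> real (zeros_in (pderiv (Pn k n z)) (eps_nbhd (S i) \<epsilon>))"
proof -
  define Q where "Q = (\<Prod>m<n. [:- z i m, 1:])"
  define J where "J = {..<k} - {i}"
  define R where "R = (\<Prod>j\<in>J. \<Prod>m<n. [:- z j m, 1:])"
  define P where "P = Pn k n z"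
  have PQR: "P = Q * R"
    unfolding P_def Pn_def Q_def R_def J_def using ik by (simp add: prod.remove)
  define c where "c = z i 0"
  have cS: "c \<in> S i" using zS ik n1 by (simp add: c_def)
  have bS: "bounded (S i)" "convex (S i)" "diameter (S i) \<le> 1" using Sj ik by auto
  have finJ: "finite J" by (simp add: J_def)
  have cardJ: "card J = k - 1" using ik by (simp add: J_def)
  have kpos: "5 * real k - 2 > 0" using k1 by simp
  have far: "cmod (x - z j m) \<ge> 5 * real k - 2" if "j \<in> J" "m < n" "cmod (x - c) \<le> 2" for x j m
  proof -
    have jk: "j < k" "j \<noteq> i" using that(1) by (auto simp: J_def)
    have "5 * real k \<le> setdist (S i) (S j)" using Sd ik jk by auto
    also have "\<dots> \<le> dist c (z j m)" using cS zS jk that(2) by (intro setdist_le_dist) auto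
    finally have "5 * real k \<le> cmod (c - z j m)" by (simp add: dist_norm)
    moreover have "cmod (c - z j m) \<le> cmod (x - z j m) + cmod (x - c)"
      using norm_triangle_ineq4[of "x - z j m" "x - c"] by simp
    ultimately show ?thesis using that(3) by simp
  qed
  have Rnz: "poly R x \<noteq> 0" if "cmod (x - c) \<le> 2" for x
  proof -
    have "x - z j m \<noteq> 0" if "j \<in> J" "m < n" for j m
      using far[OF that \<open>cmod (x - c) \<le> 2\<close>] kpos by auto
    then show ?thesis unfolding R_def by (simp add: poly_prod prod_zero_iff finJ)
  qed
  have Qnz: "poly Q x \<noteq> 0" and Qpt: "\<forall>m<n. x - z i m \<noteq> 0" if "infdist x (S i) > 0" for x
  proof -
    show "\<forall>m<n. x - z i m \<noteq> 0"
    proof (intro allI impI notI)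
      fix m assume "m < n" "x - z i m = 0"
      then have "x \<in> S i" using zS ik by auto
      then show False using that by simp
    qed
    then show "poly Q x \<noteq> 0" unfolding Q_def by (simp add: poly_prod prod_zero_iff)
  qed
  have LQ: "poly (pderiv Q) x = poly Q x * (\<Sum>m<n. 1/(x - z i m))" if "infdist x (S i) > 0" for x
  proof -
    have "poly (pderiv Q) x = poly Q x * (\<Sum>m<n. poly (pderiv [:- z i m, 1:]) x / poly [:- z i m, 1:] x)"
      unfolding Q_def using Qpt[OF that] by (intro logderiv_prod) (auto simp: algebra_simps)
    then show ?thesis by (simp add: pderiv_pCons algebra_simps)
  qed
  have LR: "poly (pderiv R) x = poly R x * (\<Sum>j\<in>J. \<Sum>m<n. 1/(x - z j m))" if "cmod (x - c) \<le> 2" for x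
  proof -
    have pt: "x - z j m \<noteq> 0" if "j \<in> J" "m < n" for j m
      using far[OF that \<open>cmod (x - c) \<le> 2\<close>] kpos by auto
    have inner: "poly (pderiv (\<Prod>m<n. [:- z j m, 1:])) x / poly (\<Prod>m<n. [:- z j m, 1:]) x
        = (\<Sum>m<n. 1/(x - z j m))" if "j \<in> J" for j
    proof -
      have nz: "poly (\<Prod>m<n. [:- z j m, 1:]) x \<noteq> 0" using pt[OF that] by (simp add: poly_prod prod_zero_iff)
      have "poly (pderiv (\<Prod>m<n. [:- z j m, 1:])) x = poly (\<Prod>m<n. [:- z j m, 1:]) x *
              (\<Sum>m<n. poly (pderiv [:- z j m, 1:]) x / poly [:- z j m, 1:] x)"
        using pt[OF that] by (intro logderiv_prod) (auto simp: algebra_simps)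
      then show ?thesis using nz by (simp add: pderiv_pCons algebra_simps)
    qed
    have "poly (pderiv R) x = poly R x * (\<Sum>j\<in>J. poly (pderiv (\<Prod>m<n. [:- z j m, 1:])) x / poly (\<Prod>m<n. [:- z j m, 1:]) x)"
      unfolding R_def using pt finJ by (intro logderiv_prod) (auto simp: poly_prod prod_zero_iff)
    also have "\<dots> = poly R x * (\<Sum>j\<in>J. \<Sum>m<n. 1/(x - z j m))" using inner by simp
    finally show ?thesis .
  qed
  have RB: "cmod (\<Sum>j\<in>J. \<Sum>m<n. 1/(x - z j m)) \<le> real (k - 1) * (real n / (5 * real k - 2))"
    if "cmod (x - c) \<le> 2" for x
  proof -
    have "cmod (\<Sum>m<n. 1/(x - z j m)) \<le> real n / (5 * real k - 2)" if "j \<in> J" for j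
    proof -
      have "cmod (\<Sum>m<n. 1/(x - z j m)) \<le> (\<Sum>m<n. 1 / (5 * real k - 2))"
      proof (rule sum_norm_le)
        fix m assume "m \<in> {..<n}"
        then have "cmod (x - z j m) \<ge> 5 * real k - 2" using far[OF \<open>j\<in>J\<close> _ \<open>cmod (x - c) \<le> 2\<close>] by auto
        then show "cmod (1 / (x - z j m)) \<le> 1 / (5 * real k - 2)"
          using kpos by (simp add: norm_divide frac_le)
      qed
      then show ?thesis by simp
    qed
    then have "cmod (\<Sum>j\<in>J. \<Sum>m<n. 1/(x - z j m)) \<le> (\<Sum>j\<in>J. real n / (5 * real k - 2))"
      by (intro sum_norm_le) auto
    then show ?thesis using cardJ by simp
  qed
  have KEY: "cmod (poly Q x * poly (pderiv R) x) < cmod (poly (pderiv Q) x * poly R x)"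
    if x2: "cmod (x - c) \<le> 2" and dc: "infdist x (S i) \<ge> 1 \<or> infdist x (S i) \<ge> \<epsilon>" for x
  proof -
    define d where "d = infdist x (S i)"
    have d2: "d \<le> 2" using infdist_le[OF cS, of x] x2 by (simp add: d_def dist_norm)
    have epos: "\<epsilon> > 0"
    proof -
      have "sqrt 5 < 3" by (rule real_less_lsqrt) auto
      then show ?thesis using eps by simp
    qed
    have dpos: "d > 0" using dc epos by (auto simp: d_def)
    have q: "(d+1)^2 < 5 * d" using quad_ineq[OF d2, of \<epsilon>] dc eps by (auto simp: d_def)
    have "real (card {..<n}) * (d / (d + 1)^2) \<le> cmod (\<Sum>m<n. 1/(x - z i m))"
      unfolding d_def using bS zS ik dpos d_def by (intro sum_inv_lower) auto
    then have L: "real n * (d / (d+1)^2) \<le> cmod (\<Sum>m<n. 1/(x - z i m))" by simp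
    have "real n / 5 < real n * (d / (d+1)^2)"
    proof -
      have "(d+1)^2 > 0" using dpos by simp
      then have "1/5 < d / (d+1)^2" using q by (simp add: less_divide_eq)
      then have "real n * (1/5) < real n * (d / (d+1)^2)" using n1 by (intro mult_strict_left_mono) auto
      then show ?thesis by simp
    qed
    moreover have "real (k - 1) * (real n / (5 * real k - 2)) \<le> real n / 5"
    proof -
      have "real (k - 1) * 5 \<le> 5 * real k - 2" using k1 by (simp add: of_nat_diff)
      then have "real (k - 1) / (5 * real k - 2) \<le> 1 / 5" using kpos by (simp add: field_simps)
      then have "real (k - 1) / (5 * real k - 2) * real n \<le> 1 / 5 * real n" by (intro mult_right_mono) auto
      then show ?thesis by (simp add: field_simps)
    qed
    ultimately have lt: "cmod (\<Sum>j\<in>J. \<Sum>m<n. 1/(x - z j m)) < cmod (\<Sum>m<n. 1/(x - z i m))"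
      using RB[OF x2] L by linarith
    have pQ: "cmod (poly Q x) > 0" using Qnz dpos d_def by simp
    have pR: "cmod (poly R x) > 0" using Rnz[OF x2] by simp
    have "cmod (poly Q x * poly (pderiv R) x) = cmod (poly Q x) * cmod (poly R x) * cmod (\<Sum>j\<in>J. \<Sum>m<n. 1/(x - z j m))"
      using LR[OF x2] by (simp add: norm_mult)
    also have "\<dots> < cmod (poly Q x) * cmod (poly R x) * cmod (\<Sum>m<n. 1/(x - z i m))"
      using lt pQ pR by simp
    also have "\<dots> = cmod (poly (pderiv Q) x * poly R x)"
      using LQ dpos d_def by (simp add: norm_mult)
    finally show ?thesis .
  qed

  define f where "f = poly (pderiv Q * R)"
  define g where "g = poly (Q * pderiv R)"
  have Pd: "pderiv P = pderiv Q * R + Q * pderiv R" by (simp add: PQR pderiv_mult algebra_simps)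
  have fg: "poly (pderiv P) = (\<lambda>p. f p + g p)" by (auto simp: f_def g_def Pd fun_eq_iff)
  define \<gamma> where "\<gamma> = circlepath c 2"
  have circ: "cmod (g x) < cmod (f x)" if "cmod (x - c) = 2" for x
  proof -
    have "infdist x (S i) \<ge> 1" using infdist_far[OF cS bS(1) bS(3), where x=x and r=2] that by simp
    then show ?thesis using KEY[of x] that by (simp add: f_def g_def)
  qed
  have circ': "cmod (g x) < cmod (f x)" if "x \<in> path_image \<gamma>" for x
    using that circ by (simp add: \<gamma>_def dist_norm norm_minus_commute)
  have fnz0: "f p \<noteq> 0" and fgnz0: "f p + g p \<noteq> 0" if "cmod (p - c) = 2" for p
  proof -
    show "f p \<noteq> 0" using circ[OF that] by auto
    show "f p + g p \<noteq> 0"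
    proof
      assume "f p + g p = 0"
      then have "f p = - g p" by (simp add: eq_neg_iff_add_eq_0)
      then show False using circ[OF that] by simp
    qed
  qed
  have x0: "cmod ((c + 2) - c) = 2" by simp
  have fnz: "pderiv Q * R \<noteq> 0" using fnz0[OF x0] by (auto simp: f_def)
  have Pnz: "pderiv P \<noteq> 0" using fgnz0[OF x0] fg by (metis poly_0)
  have RC: "(\<Sum>p\<in>{p\<in>UNIV. f p + g p = 0}. winding_number \<gamma> p * of_int (zorder (\<lambda>p. f p + g p) p))
          = (\<Sum>p\<in>{p\<in>UNIV. f p = 0}. winding_number \<gamma> p * of_int (zorder f p))"
  proof (rule Rouche_theorem)
    show "finite {p \<in> UNIV. f p + g p = 0}" using poly_roots_finite[OF Pnz] fg by simp
    show "finite {p \<in> UNIV. f p = 0}" using poly_roots_finite[OF fnz] by (simp add: f_def)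
    show "f holomorphic_on UNIV" "g holomorphic_on UNIV" by (auto simp: f_def g_def intro: holomorphic_intros)
    show "valid_path \<gamma>" by (simp add: \<gamma>_def)
    show "pathfinish \<gamma> = pathstart \<gamma>" by (simp add: \<gamma>_def)
    show "\<forall>z\<in>path_image \<gamma>. cmod (g z) < cmod (f z)" using circ' by auto
  qed auto
  have LHS: "(\<Sum>p\<in>{p\<in>UNIV. f p + g p = 0}. winding_number \<gamma> p * of_int (zorder (\<lambda>p. f p + g p) p))
     = of_nat (\<Sum>p\<in>{p. poly (pderiv P) p = 0 \<and> cmod (p - c) < 2}. order p (pderiv P))"
  proof -
    have H: "\<forall>p. poly (pderiv P) p = 0 \<longrightarrow> cmod (p - c) \<noteq> 2" using fgnz0 fg by auto
    show ?thesis using wind_sum[OF Pnz, of 2 c, OF _ H] unfolding \<gamma>_def fg by simp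
  qed
  have RHS: "(\<Sum>p\<in>{p\<in>UNIV. f p = 0}. winding_number \<gamma> p * of_int (zorder f p))
     = of_nat (\<Sum>p\<in>{p. poly (pderiv Q * R) p = 0 \<and> cmod (p - c) < 2}. order p (pderiv Q * R))"
  proof -
    have H: "\<forall>p. poly (pderiv Q * R) p = 0 \<longrightarrow> cmod (p - c) \<noteq> 2" using fnz0 unfolding f_def by blast
    have ff: "f = poly (pderiv Q * R)" by (simp add: f_def)
    show ?thesis using wind_sum[OF fnz, of 2 c, OF _ H] unfolding \<gamma>_def ff by simp
  qed
  have Qr: "cmod (x - c) < 2" if "poly (pderiv Q) x = 0" for x
  proof (rule ccontr)
    assume "\<not> cmod (x - c) < 2"
    then have "infdist x (S i) \<ge> 1" using infdist_far[OF cS bS(1) bS(3), where x=x and r=2] by simp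
    then have dpos: "infdist x (S i) > 0" by simp
    have "real (card {..<n}) * (infdist x (S i) / (infdist x (S i) + 1)^2) \<le> cmod (\<Sum>m<n. 1/(x - z i m))"
      using bS zS ik dpos by (intro sum_inv_lower) auto
    moreover have "real (card {..<n}) * (infdist x (S i) / (infdist x (S i) + 1)^2) > 0"
      using n1 dpos by simp
    ultimately have "(\<Sum>m<n. 1/(x - z i m)) \<noteq> 0" by auto
    then have "poly (pderiv Q) x \<noteq> 0" using LQ[OF dpos] Qnz[OF dpos] by simp
    then show False using that by simp
  qed
  have QdR: "pderiv Q \<noteq> 0" using fnz by auto
  have degQ: "degree Q = n"
    unfolding Q_def by (subst degree_prod_eq_sum_degree) auto
  have setEq: "{p. poly (pderiv Q * R) p = 0 \<and> cmod (p - c) < 2} = {p. poly (pderiv Q) p = 0}"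
    using Qr Rnz by (auto simp: poly_mult)
  have ordEq: "order p (pderiv Q * R) = order p (pderiv Q)" if "poly (pderiv Q) p = 0" for p
  proof -
    have "poly R p \<noteq> 0" using Rnz Qr[OF that] by simp
    then have "order p R = 0" using order_root[of R p] by auto
    then show ?thesis using order_mult[OF fnz] by simp
  qed
  have cnt: "(\<Sum>p\<in>{p. poly (pderiv P) p = 0 \<and> cmod (p - c) < 2}. order p (pderiv P)) = n - 1"
  proof -
    have "of_nat (\<Sum>p\<in>{p. poly (pderiv P) p = 0 \<and> cmod (p - c) < 2}. order p (pderiv P))
        = (of_nat (\<Sum>p\<in>{p. poly (pderiv Q * R) p = 0 \<and> cmod (p - c) < 2}. order p (pderiv Q * R)) :: complex)"
      using RC LHS RHS by simp
    then have "(\<Sum>p\<in>{p. poly (pderiv P) p = 0 \<and> cmod (p - c) < 2}. order p (pderiv P))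
        = (\<Sum>p\<in>{p. poly (pderiv Q * R) p = 0 \<and> cmod (p - c) < 2}. order p (pderiv Q * R))"
      using of_nat_eq_iff by blast
    also have "\<dots> = (\<Sum>p\<in>{p. poly (pderiv Q) p = 0}. order p (pderiv Q))"
      unfolding setEq using ordEq by (intro sum.cong) auto
    also have "\<dots> = degree (pderiv Q)" using sum_order_degree[OF QdR] by simp
    also have "\<dots> = n - 1" by (simp add: degree_pderiv degQ)
    finally show ?thesis .
  qed
  have sub: "{p. poly (pderiv P) p = 0 \<and> cmod (p - c) < 2} \<subseteq> {x \<in> eps_nbhd (S i) \<epsilon>. poly (pderiv P) x = 0}"
  proof safe
    fix p assume p0: "poly (pderiv P) p = 0" and pc: "cmod (p - c) < 2"
    show "p \<in> eps_nbhd (S i) \<epsilon>"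
    proof (rule ccontr)
      assume "p \<notin> eps_nbhd (S i) \<epsilon>"
      then have "infdist p (S i) \<ge> \<epsilon>" by (simp add: eps_nbhd_def)
      then have "cmod (g p) < cmod (f p)" using KEY[of p] pc by (simp add: f_def g_def)
      moreover have "f p + g p = 0" using p0 fg by metis
      then have "f p = - g p" by (simp add: eq_neg_iff_add_eq_0)
      ultimately show False by simp
    qed
  qed
  have fin2: "finite {x \<in> eps_nbhd (S i) \<epsilon>. poly (pderiv P) x = 0}"
    using poly_roots_finite[OF Pnz] by (rule rev_finite_subset) auto
  have "n - 1 \<le> zeros_in (pderiv P) (eps_nbhd (S i) \<epsilon>)"
    unfolding zeros_in_def cnt[symmetric] by (rule sum_mono2[OF fin2 sub]) simp
  then show ?thesis using n1 by (simp add: P_def of_nat_diff)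
qed


theorem mainTheorem1:
  fixes k :: nat and \<epsilon> :: real
  assumes "k \<ge> 1"
    and "\<epsilon> > (3 - sqrt 5) / 2"
  shows "\<exists>c::real. \<forall>S :: nat \<Rightarrow> complex set.
           (\<forall>j<k. bounded (S j) \<and> convex (S j) \<and> diameter (S j) \<le> 1) \<and>
           (\<forall>i<k. \<forall>j<k. i \<noteq> j \<longrightarrow> S i \<inter> S j = {} \<and> setdist (S i) (S j) \<ge> 5 * real k)
           \<longrightarrow> (\<forall>n::nat. \<forall>z :: nat \<Rightarrow> nat \<Rightarrow> complex. n \<ge> 1 \<longrightarrow>
                 (\<forall>j<k. \<forall>i<n. z j i \<in> S j) \<longrightarrow>
                 (\<forall>i<k. real (zeros_in (pderiv (Pn k n z)) (eps_nbhd (S i) \<epsilon>)) \<ge> real n - c))"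
proof (intro exI[of _ 1] allI impI)
  fix S :: "nat \<Rightarrow> complex set" and n :: nat and z :: "nat \<Rightarrow> nat \<Rightarrow> complex" and i :: nat
  assume H: "(\<forall>j<k. bounded (S j) \<and> convex (S j) \<and> diameter (S j) \<le> 1) \<and>
           (\<forall>i<k. \<forall>j<k. i \<noteq> j \<longrightarrow> S i \<inter> S j = {} \<and> setdist (S i) (S j) \<ge> 5 * real k)"
    and n1: "(1::nat) \<le> n" and zS: "\<forall>j<k. \<forall>i<n. z j i \<in> S j" and ik: "i < k"
  show "real n - 1 \<le> real (zeros_in (pderiv (Pn k n z)) (eps_nbhd (S i) \<epsilon>))"
    using cluster_count[OF assms(1) assms(2) _ _ n1 zS ik] H by blast
qed

end
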